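(* For every integer $n\ge 0$, \[ (p_{2,5}+p_{3,5})(n)=p(n)+\sum_{k=1}^\infty (-1)^k \big(p(n-P_{7,k}) +p(n-Q_{7,k})\big),\] where $P_{7,k}=\frac{k(5k-3)}{2}$ and $Q_{7,k}=\frac{k(5k+3)}{2}$.
   Context: $p(n)$ is the number of integer partitions of $n$, with $p(0)=1$ and $p(x)=0$ for $x<0$. $(p_{2,5}+p_{3,5})(n)$ denotes the number of partitions of $n$ in which every part is congruent to $2$ or to $3$ modulo $5$ (equal to $1$ for $n=0$, and $0$ for $n\notin\mathbb{N}_0$). *)

theory Defs
  imports Complex_Main "HOL-Library.Multiset"
begin

definition partitions_with :: "(nat \<Rightarrow> bool) \<Rightarrow> nat \<Rightarrow> nat multiset set" where
  "partitions_with A n = {M. (\<forall>x\<in>#M. 0 < x \<and> A x) \<and> sum_mset M = n}"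

definition part :: "int \<Rightarrow> int" where
  "part x = (if x < 0 then 0 else int (card (partitions_with (\<lambda>_. True) (nat x))))"

definition p25_35 :: "int \<Rightarrow> int" where
  "p25_35 x = (if x < 0 then 0 else
     int (card (partitions_with (\<lambda>m. m mod 5 = 2 \<or> m mod 5 = 3) (nat x))))"

definition P7 :: "nat \<Rightarrow> int" where
  "P7 k = (int k * (5 * int k - 3)) div 2"

definition Q7 :: "nat \<Rightarrow> int" where
  "Q7 k = (int k * (5 * int k + 3)) div 2"

end

theory Submission
  imports Defs "HOL-Computational_Algebra.Formal_Power_Series"
begin

unbundle fps_syntax


fun qb :: "'a::comm_ring_1 \<Rightarrow> nat \<Rightarrow> nat \<Rightarrow> 'a" where
  "qb q 0 j = (if j = 0 then 1 else 0)"
| "qb q (Suc m) 0 = 1"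
| "qb q (Suc m) (Suc j) = qb q m j + q ^ Suc j * qb q m (Suc j)"

definition qpoch :: "'a::comm_ring_1 \<Rightarrow> nat \<Rightarrow> 'a" where
  "qpoch q m = (\<Prod>i<m. 1 - q ^ Suc i)"

fun tri :: "nat \<Rightarrow> nat" where
  "tri 0 = 0" | "tri (Suc j) = tri j + j"

lemma qpoch_Suc: "qpoch q (Suc m) = qpoch q m * (1 - q ^ Suc m)"
  by (simp add: qpoch_def)

lemma qpoch_0[simp]: "qpoch q 0 = 1" by (simp add: qpoch_def)

lemma qb_0_right[simp]: "qb q m 0 = 1"
  by (cases m) auto

lemma qb_gt: "m < j \<Longrightarrow> qb q m j = 0"
proof (induction m arbitrary: j)
  case 0 then show ?case by simp
next
  case (Suc m) then obtain j' where "j = Suc j'" by (cases j) auto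
  with Suc show ?case by simp
qed

lemma qb_Suc_gen: "qb q (Suc m) j = (if j = 0 then 0 else qb q m (j - 1)) + q ^ j * qb q m j"
  by (cases j) auto

lemma qb_fact: "j \<le> m \<Longrightarrow> qb q m j * qpoch q j * qpoch q (m - j) = qpoch q m"
proof (induction m arbitrary: j)
  case 0 then show ?case by simp
next
  case (Suc m)
  show ?case
  proof (cases j)
    case 0 then show ?thesis by simp
  next
    case (Suc j')
    then have jm: "j' \<le> m" using Suc.prems by simp
    have h1: "qb q m j' * qpoch q j' * qpoch q (m - j') = qpoch q m" using Suc.IH jm by simp
    show ?thesis
    proof (cases "j' = m")
      case True
      then show ?thesis using h1 Suc by (simp add: qb_gt qpoch_Suc; metis mult.assoc)
    next
      case False
      then have jm2: "Suc j' \<le> m" using jm by simp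
      have h2: "qb q m (Suc j') * qpoch q (Suc j') * qpoch q (m - Suc j') = qpoch q m" using Suc.IH jm2 by simp
      have e: "m - j' = Suc (m - Suc j')" using jm2 by simp
      have "qb q (Suc m) j * qpoch q j * qpoch q (Suc m - j)
          = (qb q m j' + q ^ Suc j' * qb q m (Suc j')) * (qpoch q j' * (1 - q ^ Suc j')) * qpoch q (m - j')"
        using Suc by (simp add: qpoch_Suc)
      also have "\<dots> = (qb q m j' * qpoch q j' * qpoch q (m - j')) * (1 - q ^ Suc j')
          + q ^ Suc j' * (qb q m (Suc j') * qpoch q (Suc j') * qpoch q (m - Suc j')) * (1 - q ^ (m - j'))"
        unfolding e qpoch_Suc by (simp add: algebra_simps)
      also have "\<dots> = qpoch q m * (1 - q ^ Suc j') + q ^ Suc j' * qpoch q m * (1 - q ^ (m - j'))"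
        using h1 h2 by simp
      also have "\<dots> = qpoch q m * (1 - q ^ Suc j' * q ^ (m - j'))"
        by (simp add: algebra_simps)
      also have "q ^ Suc j' * q ^ (m - j') = q ^ Suc m"
        by (simp only: power_add[symmetric]) (use jm in simp)
      finally show ?thesis by (simp add: qpoch_Suc)
    qed
  qed
qed

lemma qbinomial:
  "(\<Prod>i<m. x + y * q ^ i) = (\<Sum>j\<le>m. qb q m j * q ^ tri j * y ^ j * x ^ (m - j))"
proof (induction m arbitrary: y)
  case 0 then show ?case by simp
next
  case (Suc m)
  have "(\<Prod>i<Suc m. x + y * q ^ i) = (x + y) * (\<Prod>i<m. x + (q * y) * q ^ i)"
    by (subst prod.lessThan_Suc_shift) (simp add: algebra_simps)
  also have "\<dots> = (x + y) * (\<Sum>j\<le>m. qb q m j * q ^ tri j * (q*y) ^ j * x ^ (m - j))"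
    using Suc.IH by simp
  also have "\<dots> = (\<Sum>j\<le>m. qb q m j * q ^ tri (Suc j) * y ^ Suc j * x ^ (m - j))
       + (\<Sum>j\<le>m. q ^ j * qb q m j * q ^ tri j * y ^ j * x ^ (Suc m - j))"
    by (simp add: sum_distrib_left algebra_simps power_mult_distrib power_add Suc_diff_le sum.distrib)
  also have "(\<Sum>j\<le>m. qb q m j * q ^ tri (Suc j) * y ^ Suc j * x ^ (m - j))
      = (\<Sum>j\<le>Suc m. (if j = 0 then 0 else qb q m (j - 1)) * q ^ tri j * y ^ j * x ^ (Suc m - j))"
    by (subst sum.atMost_Suc_shift) simp
  also have "(\<Sum>j\<le>m. q ^ j * qb q m j * q ^ tri j * y ^ j * x ^ (Suc m - j))
      = (\<Sum>j\<le>Suc m. q ^ j * qb q m j * q ^ tri j * y ^ j * x ^ (Suc m - j))"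
    by (simp add: qb_gt)
  finally show ?case
    by (simp add: qb_Suc_gen sum.distrib[symmetric] algebra_simps)
qed



abbreviation XX :: "real fps" where "XX \<equiv> fps_X"

definition TT :: "nat \<Rightarrow> real fps" where
  "TT n = (\<Prod>i<n. (1 - XX ^ (5*i+1)) * (1 - XX ^ (5*i+4)))"

definition EE :: "nat \<Rightarrow> real fps" where
  "EE n = qpoch (XX ^ 5) n"

definition ee :: "nat \<Rightarrow> nat \<Rightarrow> nat" where
  "ee n j = (if n \<le> j then 5 * tri (j - n) + 4 * (j - n) else 5 * tri (n - j) + (n - j))"

lemma tri2: "2 * tri j = j * (j - 1)"
proof (induction j)
  case (Suc j) then show ?case by (cases j) (auto simp: algebra_simps)
qed simp

lemma tri_sum: "tri j = (\<Sum>i<j. i)"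
  by (induction j) auto

lemma prod_split: "(\<Prod>j<a+(b::nat). f j) = (\<Prod>j<a. f j) * (\<Prod>i<b. f (a+i))"
  by (induction b) (auto simp: mult.assoc)

lemma sum_split: "(\<Sum>j<a+(b::nat). f j) = (\<Sum>j<a. f j) + (\<Sum>i<b. f (a+i))"
  by (induction b) (auto simp: add.assoc)

lemma tri_int: "2 * int (tri a) = int a * (int a - 1)"
proof -
  have "int (2 * tri a) = int (a * (a - 1))" using tri2 by metis
  then show ?thesis by (cases a) (auto simp: algebra_simps)
qed

lemma ee_eq:
  assumes "1 \<le> n" "j \<le> 2*n"
  shows "5 * tri j + (5*n-4) * (2*n-j) = (5 * tri n + n * (5*n-4)) + ee n j"
proof -
  have A: "2 * int (5 * tri j + (5*n-4) * (2*n-j)) = 5 * (int j * (int j - 1)) + 2 * (5 * int n - 4) * (2 * int n - int j)"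
  proof -
    have A0: "int (5 * tri j + (5*n-4) * (2*n-j)) = 5 * int (tri j) + (5*int n - 4)*(2*int n - int j)"
      using assms by (simp add: of_nat_diff)
    show ?thesis using A0 tri_int[of j] by (simp add: algebra_simps)
  qed
  have R0: "int ((5 * tri n + n * (5*n-4)) + ee n j) = 5*int(tri n) + int n*(5*int n - 4) + int (ee n j)"
    using assms by (simp add: of_nat_diff)
  show ?thesis
  proof (cases "n \<le> j")
    case True
    then obtain k where k: "j = n + k" by (metis le_add_diff_inverse)
    have "2 * int ((5 * tri n + n * (5*n-4)) + ee n j) = 5 * (int n * (int n - 1)) + 2 * int n * (5 * int n - 4)
       + 5 * (int k * (int k - 1)) + 8 * int k"
    proof -
      have "int (ee n j) = 5*int(tri k) + 4*int k" using True k by (simp add: ee_def)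
      then have "2 * int ((5 * tri n + n * (5*n-4)) + ee n j) = 5 * (2*int(tri n)) + 2 * int n * (5 * int n - 4) + 5*(2*int (tri k)) + 8 * int k"
        unfolding R0 by (simp add: algebra_simps)
      then show ?thesis unfolding tri_int .
    qed
    moreover have "2 * int (5 * tri j + (5*n-4) * (2*n-j)) = 5 * (int n * (int n - 1)) + 2 * int n * (5 * int n - 4)
       + 5 * (int k * (int k - 1)) + 8 * int k"
      by (subst A) (simp add: k algebra_simps)
    ultimately have "int (5 * tri j + (5*n-4) * (2*n-j)) = int ((5 * tri n + n * (5*n-4)) + ee n j)"
      by (metis mult_left_cancel zero_neq_numeral)
    then show ?thesis by (simp only: of_nat_eq_iff)
  next
    case False
    then obtain k where k: "n = j + k" by (metis le_add_diff_inverse nat_le_linear)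
    have "2 * int ((5 * tri n + n * (5*n-4)) + ee n j) = 5 * (int n * (int n - 1)) + 2 * int n * (5 * int n - 4)
       + 5 * (int k * (int k - 1)) + 2 * int k"
    proof -
      have "int (ee n j) = 5*int(tri k) + int k" using False k by (simp add: ee_def)
      then have "2 * int ((5 * tri n + n * (5*n-4)) + ee n j) = 5 * (2*int(tri n)) + 2 * int n * (5 * int n - 4) + 5*(2*int (tri k)) + 2 * int k"
        unfolding R0 by (simp add: algebra_simps)
      then show ?thesis unfolding tri_int .
    qed
    moreover have "2 * int (5 * tri j + (5*n-4) * (2*n-j)) = 5 * (int n * (int n - 1)) + 2 * int n * (5 * int n - 4)
       + 5 * (int k * (int k - 1)) + 2 * int k"
      by (subst A) (simp add: k algebra_simps)
    ultimately have "int (5 * tri j + (5*n-4) * (2*n-j)) = int ((5 * tri n + n * (5*n-4)) + ee n j)"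
      by (metis mult_left_cancel zero_neq_numeral)
    then show ?thesis by (simp only: of_nat_eq_iff)
  qed
qed

lemma TT_sum:
  assumes n: "1 \<le> n"
  shows "TT n = (\<Sum>j\<le>2*n. (-1) ^ (j + n) * qb (XX ^ 5) (2*n) j * XX ^ ee n j)"
proof -
  define s where "s = 5 * tri n + n * (5*n-4)"
  define f where "f j = XX ^ (5*n-4) + (-1) * (XX ^ 5) ^ j" for j
  have P1: "(\<Prod>j<2*n. f j) = (\<Sum>j\<le>2*n. (-1) ^ j * qb (XX ^ 5) (2*n) j * (XX ^ s * XX ^ ee n j))"
  proof -
    have "(\<Prod>j<2*n. f j) = (\<Sum>j\<le>2*n. qb (XX ^ 5) (2*n) j * (XX ^ 5) ^ tri j * (-1) ^ j * (XX ^ (5*n-4)) ^ (2*n - j))"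
      unfolding f_def by (rule qbinomial)
    also have "\<dots> = (\<Sum>j\<le>2*n. (-1) ^ j * qb (XX ^ 5) (2*n) j * (XX ^ s * XX ^ ee n j))"
    proof (rule sum.cong)
      fix j assume "j \<in> {..2*n}"
      then have "5 * tri j + (5*n-4) * (2*n-j) = s + ee n j" using ee_eq[OF n] s_def by simp
      then have h: "(XX ^ 5) ^ tri j * (XX ^ (5*n-4)) ^ (2*n - j) = XX ^ s * XX ^ ee n j"
        by (simp flip: power_mult power_add)
      then show "qb (XX ^ 5) (2*n) j * (XX ^ 5) ^ tri j * (-1) ^ j * (XX ^ (5*n-4)) ^ (2*n - j)
          = (-1) ^ j * qb (XX ^ 5) (2*n) j * (XX ^ s * XX ^ ee n j)"
      proof -
        have "qb (XX ^ 5) (2*n) j * (XX ^ 5) ^ tri j * (-1) ^ j * (XX ^ (5*n-4)) ^ (2*n - j)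
          = (-1) ^ j * qb (XX ^ 5) (2*n) j * ((XX ^ 5) ^ tri j * (XX ^ (5*n-4)) ^ (2*n - j))"
          by (simp only: mult_ac)
        then show ?thesis by (simp only: h)
      qed
    qed simp
    finally show ?thesis .
  qed
  have P2: "(\<Prod>j<2*n. f j) = (-1) ^ n * XX ^ s * TT n"
  proof -
    have "(\<Prod>j<2*n. f j) = (\<Prod>j<n. f j) * (\<Prod>i<n. f (n+i))"
      using prod_split[of f n n] by (simp add: mult_2)
    also have "(\<Prod>j<n. f j) = (\<Prod>j<n. (- (XX ^ (5*j))) * (1 - XX ^ (5*(n-j)-4)))"
    proof (rule prod.cong)
      fix j assume "j \<in> {..<n}"
      then have "5*n-4 = 5*j + (5*(n-j)-4)" by auto
      then show "f j = (- (XX ^ (5*j))) * (1 - XX ^ (5*(n-j)-4))"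
        unfolding f_def by (simp add: algebra_simps power_add flip: power_mult)
    qed simp
    also have "\<dots> = (\<Prod>j<n. - (XX ^ (5*j))) * (\<Prod>j<n. 1 - XX ^ (5*(n-j)-4))"
      by (rule prod.distrib)
    also have "(\<Prod>j<n. - (XX ^ (5*j))) = (-1) ^ n * XX ^ (5 * tri n)"
    proof -
      have "(\<Prod>j<n. - (XX ^ (5*j))) = (\<Prod>j<n. (-1) * XX ^ (5*j))" by simp
      also have "\<dots> = (\<Prod>j<n. (-1::real fps)) * (\<Prod>j<n. XX ^ (5*j))" by (rule prod.distrib)
      also have "(\<Prod>j<n. (-1::real fps)) = (-1) ^ n" by simp
      also have "(\<Prod>j<n. XX ^ (5*j)) = XX ^ (\<Sum>j<n. 5*j)" by (simp add: power_sum)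
      also have "(\<Sum>j<n. 5*j) = 5 * tri n" by (simp add: tri_sum sum_distrib_left)
      finally show ?thesis .
    qed
    also have "(\<Prod>j<n. 1 - XX ^ (5*(n-j)-4)) = (\<Prod>i<n. 1 - XX ^ (5*i+1))"
    proof -
      have "(\<Prod>j<n. 1 - XX ^ (5*(n-j)-4)) = (\<Prod>i<n. 1 - XX ^ (5*(n-(n - Suc i))-4))"
        by (rule prod.nat_diff_reindex[symmetric])
      also have "\<dots> = (\<Prod>i<n. 1 - XX ^ (5*i+1))"
        by (rule prod.cong) auto
      finally show ?thesis .
    qed
    also have "(\<Prod>i<n. f (n+i)) = (\<Prod>i<n. XX ^ (5*n-4) * (1 - XX ^ (5*i+4)))"
    proof (rule prod.cong)
      fix i assume "i \<in> {..<n}"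
      have "5*(n+i) = (5*n-4) + (5*i+4)" using n by simp
      then show "f (n+i) = XX ^ (5*n-4) * (1 - XX ^ (5*i+4))"
        unfolding f_def by (simp add: algebra_simps flip: power_mult power_add)
    qed simp
    also have "\<dots> = (XX ^ (5*n-4)) ^ n * (\<Prod>i<n. 1 - XX ^ (5*i+4))"
      by (simp add: prod.distrib)
    finally have f1: "(\<Prod>j<2*n. f j) = ((-1)^n * XX^(5*tri n)) * (\<Prod>i<n. 1 - XX^(5*i+1)) * ((XX^(5*n-4))^n * (\<Prod>i<n. 1 - XX^(5*i+4)))" .
    have f2: "XX ^ s = XX^(5*tri n) * (XX^(5*n-4))^n"
      unfolding s_def power_add by (simp add: power_mult[symmetric] mult.commute)
    show ?thesis unfolding TT_def prod.distrib f1 f2 by (simp only: mult_ac)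
  qed
  have "XX ^ s * TT n = (-1) ^ n * ((-1) ^ n * XX ^ s * TT n)"
  proof -
    have "(-1::real fps)^n * (-1)^n = 1" by (simp flip: power_mult_distrib)
    then show ?thesis by (simp add: mult.assoc[symmetric])
  qed
  also have "\<dots> = XX ^ s * (\<Sum>j\<le>2*n. (-1) ^ (j + n) * qb (XX ^ 5) (2*n) j * XX ^ ee n j)"
    unfolding P2[symmetric] P1 sum_distrib_left by (rule sum.cong) (simp_all add: power_add mult_ac)
  finally show ?thesis by simp
qed



lemma EE_Suc: "EE (Suc m) = EE m * (1 - (XX ^ 5) ^ Suc m)"
  unfolding EE_def by (rule qpoch_Suc)

lemma EE_nth0: "EE m $ 0 = 1"
  by (induction m) (simp_all add: EE_Suc, simp add: EE_def)

lemma EE_cong: "L \<le> m \<Longrightarrow> (XX ^ 5) ^ Suc L dvd (EE m - EE L)"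
proof (induction m rule: dec_induct)
  case base then show ?case by simp
next
  case (step m)
  have eq: "EE (Suc m) - EE L = (EE m - EE L) - EE m * (XX ^ 5) ^ Suc m"
    by (simp add: EE_Suc algebra_simps)
  have "(XX ^ 5) ^ Suc L dvd (XX ^ 5) ^ Suc m"
    using step by (intro le_imp_power_dvd) simp
  then have "(XX ^ 5) ^ Suc L dvd EE m * (XX ^ 5) ^ Suc m" by (rule dvd_mult)
  then show ?case unfolding eq by (rule dvd_diff[OF step.IH])
qed

lemma neg1_pow_mult_nth: "((-1::real fps) ^ k * g) $ i = (-1) ^ k * g $ i"
  by (induction k) auto

lemma c_lemma:
  assumes "j \<le> 2*n" "L = min j (2*n - j)" "i < 5 * Suc L"
  shows "(qb (XX ^ 5) (2*n) j * EE n) $ i = (if i = 0 then 1 else 0)"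
proof -
  define c where "c = qb (XX ^ 5) (2*n) j * EE n"
  define D where "D = (XX ^ 5) ^ Suc L"
  have F: "qb (XX ^ 5) (2*n) j * EE j * EE (2*n - j) = EE (2*n)"
    unfolding EE_def using assms(1) by (rule qb_fact)
  have Lle: "L \<le> j" "L \<le> 2*n - j" "L \<le> 2*n" "L \<le> n" using assms by auto
  have d1: "D dvd (EE j - EE L)" "D dvd (EE (2*n - j) - EE L)" "D dvd (EE (2*n) - EE L)" "D dvd (EE n - EE L)"
    unfolding D_def by (rule EE_cong, use Lle in simp)+
  have eq: "(c - 1) * (EE L * EE L) = c * (EE L * (EE L - EE (2*n-j)) + EE (2*n-j) * (EE L - EE j))
      + (EE (2*n) * (EE n - EE L) + EE L * (EE (2*n) - EE L))"
  proof -
    have "c * EE j * EE (2*n-j) = EE (2*n) * EE n" unfolding c_def using F by (simp add: mult_ac)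
    then show ?thesis by (simp add: algebra_simps)
  qed
  have dm: "\<And>a b. D dvd (a - b) \<Longrightarrow> D dvd (b - a)"
    by (metis dvd_minus_iff minus_diff_eq)
  have "D dvd (c - 1) * (EE L * EE L)"
    unfolding eq using d1 dm by (intro dvd_add dvd_mult) auto
  moreover have "is_unit (EE L * EE L)" by (simp add: EE_nth0)
  ultimately have "D dvd (c - 1)" by (simp add: dvd_mult_unit_iff)
  then obtain h where h: "c - 1 = D * h" by (auto elim: dvdE)
  have "D = XX ^ (5 * Suc L)" unfolding D_def by (simp only: power_mult)
  then have "(c - 1) $ i = 0" using h assms(3) by (simp add: fps_X_power_mult_nth)
  then show ?thesis unfolding c_def[symmetric] by simp
qed

definition AA :: "nat \<Rightarrow> real fps" where "AA n = EE n * TT n"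

lemma ee_ge: "j \<le> 2*n \<Longrightarrow> n - min j (2*n - j) \<le> ee n j"
  by (auto simp: ee_def)

lemma AA_nth:
  assumes "1 \<le> n" "N \<le> n" "i \<le> N"
  shows "AA n $ i = (\<Sum>j\<le>2*n. (-1) ^ (j + n) * (if i = ee n j then 1 else 0))"
proof -
  have "AA n = (\<Sum>j\<le>2*n. (-1) ^ (j + n) * ((qb (XX ^ 5) (2*n) j * EE n) * XX ^ ee n j))"
    unfolding AA_def TT_sum[OF assms(1)] sum_distrib_left by (rule sum.cong) (simp_all add: mult_ac)
  then have "AA n $ i = (\<Sum>j\<le>2*n. (-1) ^ (j + n) * ((qb (XX ^ 5) (2*n) j * EE n) * XX ^ ee n j) $ i)"
    by (simp add: fps_sum_nth neg1_pow_mult_nth)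
  also have "\<dots> = (\<Sum>j\<le>2*n. (-1) ^ (j + n) * (if i = ee n j then 1 else 0))"
  proof (rule sum.cong)
    fix j assume j: "j \<in> {..2*n}"
    define L where "L = min j (2*n - j)"
    have "n - L \<le> ee n j" using ee_ge j L_def by simp
    then have lt: "i - ee n j < 5 * Suc L" using assms L_def by auto
    have "((qb (XX ^ 5) (2*n) j * EE n) * XX ^ ee n j) $ i = (if i = ee n j then 1 else 0)"
      using c_lemma[of j n L "i - ee n j"] lt j L_def by (auto simp: fps_X_power_mult_right_nth)
    then show "(-1) ^ (j + n) * ((qb (XX ^ 5) (2*n) j * EE n) * XX ^ ee n j) $ i = (-1) ^ (j + n) * (if i = ee n j then 1 else 0)"
      by simp
  qed simp
  finally show ?thesis .
qed



definition msets :: "nat set \<Rightarrow> nat \<Rightarrow> nat multiset set" where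
  "msets S n = {M. set_mset M \<subseteq> S \<and> sum_mset M = n}"

definition cnt :: "nat set \<Rightarrow> nat \<Rightarrow> nat" where
  "cnt S n = card (msets S n)"

definition FS :: "nat set \<Rightarrow> real fps" where
  "FS S = Abs_fps (\<lambda>n. real (cnt S n))"

lemma size_le_sum_mset: "(\<forall>x\<in>#M. (0::nat) < x) \<Longrightarrow> size M \<le> sum_mset M"
  by (induction M) auto

lemma finite_msets:
  assumes "finite S" "0 \<notin> S"
  shows "finite (msets S n)"
proof -
  have "msets S n \<subseteq> (\<Union>k\<le>n. multisets_of_size S k)"
  proof
    fix M assume "M \<in> msets S n"
    then have M: "set_mset M \<subseteq> S" "sum_mset M = n" by (auto simp: msets_def)
    then have "\<forall>x\<in>#M. 0 < x" using assms(2) by (metis gr0I subsetD)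
    then have "size M \<le> n" using size_le_sum_mset M by metis
    then show "M \<in> (\<Union>k\<le>n. multisets_of_size S k)" using M by (auto simp: multisets_of_size_def)
  qed
  moreover have "finite (\<Union>k\<le>n. multisets_of_size S k)" using assms(1) by auto
  ultimately show ?thesis by (rule finite_subset)
qed

lemma cnt_insert:
  assumes "finite S" "0 \<notin> S" "m \<notin> S" "0 < m"
  shows "cnt (insert m S) n = cnt S n + (if m \<le> n then cnt (insert m S) (n - m) else 0)"
proof -
  define B where "B = {M \<in> msets (insert m S) n. m \<in># M}"
  have fin: "finite (msets (insert m S) k)" for k using assms by (intro finite_msets) auto
  have U: "msets (insert m S) n = msets S n \<union> B"
    unfolding B_def msets_def by auto
  have disj: "msets S n \<inter> B = {}"
    unfolding B_def msets_def using assms(3) by auto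
  have finS: "finite (msets S n)" using assms by (intro finite_msets)
  have finB: "finite B" unfolding B_def using fin[of n] by simp
  have cB: "card B = (if m \<le> n then cnt (insert m S) (n - m) else 0)"
  proof (cases "m \<le> n")
    case True
    have "B = add_mset m ` msets (insert m S) (n - m)"
    proof
      show "B \<subseteq> add_mset m ` msets (insert m S) (n - m)"
      proof
        fix M assume "M \<in> B"
        then have M: "set_mset M \<subseteq> insert m S" "sum_mset M = n" "m \<in># M" by (auto simp: B_def msets_def)
        then have "M = add_mset m (M - {#m#})" by simp
        moreover have "sum_mset (M - {#m#}) = n - m"
          using M sum_mset.remove[OF M(3)] by simp
        moreover have "set_mset (M - {#m#}) \<subseteq> insert m S"
          using M(1) by (meson in_diffD subset_eq)
        ultimately show "M \<in> add_mset m ` msets (insert m S) (n - m)"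
          unfolding msets_def by blast
      qed
    next
      show "add_mset m ` msets (insert m S) (n - m) \<subseteq> B"
        using True unfolding B_def msets_def by auto
    qed
    moreover have "inj_on (add_mset m) (msets (insert m S) (n - m))"
      by (auto intro: inj_onI)
    ultimately show ?thesis using True by (simp add: card_image cnt_def)
  next
    case False
    have "B = {}"
    proof (rule ccontr)
      assume "B \<noteq> {}"
      then obtain M where M: "sum_mset M = n" "m \<in># M" unfolding B_def msets_def by auto
      then have "m \<le> n" using sum_mset.remove[OF M(2)] by simp
      with False show False by simp
    qed
    then show ?thesis using False by simp
  qed
  show ?thesis unfolding cnt_def U using card_Un_disjoint[OF finS finB disj] cB by (simp add: cnt_def)
qed

lemma FS_insert:
  assumes "finite S" "0 \<notin> S" "m \<notin> S" "0 < m"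
  shows "FS (insert m S) * (1 - XX ^ m) = FS S"
proof -
  have "FS (insert m S) = FS S + XX ^ m * FS (insert m S)"
    by (rule fps_ext) (simp add: FS_def fps_X_power_mult_nth cnt_insert[OF assms] not_less)
  then show ?thesis by (simp add: algebra_simps)
qed

lemma FS_prod:
  assumes "finite S" "0 \<notin> S"
  shows "FS S * (\<Prod>x\<in>S. 1 - XX ^ x) = 1"
  using assms
proof (induction S rule: finite_induct)
  case empty
  have "msets {} n = (if n = 0 then {{#}} else {})" for n
    unfolding msets_def by auto
  then have "FS {} = 1" by (intro fps_ext) (simp add: FS_def cnt_def)
  then show ?case by simp
next
  case (insert m S)
  have "FS (insert m S) * (\<Prod>x\<in>insert m S. 1 - XX ^ x) = (FS (insert m S) * (1 - XX ^ m)) * (\<Prod>x\<in>S. 1 - XX ^ x)"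
    using insert by (simp add: mult_ac)
  also have "\<dots> = FS S * (\<Prod>x\<in>S. 1 - XX ^ x)"
    using insert by (subst FS_insert) auto
  also have "\<dots> = 1" using insert by simp
  finally show ?case .
qed

lemma mem_le_sum_mset: "x \<in># M \<Longrightarrow> x \<le> sum_mset (M :: nat multiset)"
  using sum_mset.remove[of x M] by simp

lemma partitions_with_msets:
  assumes "n \<le> K"
  shows "partitions_with A n = msets {m. 0 < m \<and> A m \<and> m \<le> K} n"
  unfolding partitions_with_def msets_def using assms mem_le_sum_mset
  by (auto dest: mem_le_sum_mset)



lemma Sp_prod: "(\<Prod>x\<in>{m. 0<m \<and> m \<le> 5*k \<and> \<not>(m mod 5 = 2 \<or> m mod 5 = 3)}. 1 - XX^x) = AA k"
proof (induction k)
  case 0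
  have "{m::nat. 0<m \<and> m \<le> 5*0 \<and> \<not>(m mod 5 = 2 \<or> m mod 5 = 3)} = {}" by auto
  then show ?case unfolding AA_def EE_def TT_def by (simp only: prod.empty) simp
next
  case (Suc k)
  define T where "T = {m::nat. 0<m \<and> m \<le> 5*k \<and> \<not>(m mod 5 = 2 \<or> m mod 5 = 3)}"
  have fT: "finite T" unfolding T_def by (rule finite_subset[of _ "{..5*k}"]) auto
  have eq: "{m::nat. 0<m \<and> m \<le> 5*Suc k \<and> \<not>(m mod 5 = 2 \<or> m mod 5 = 3)} = insert (5*k+1) (insert (5*k+4) (insert (5*k+5) T))"
    unfolding T_def by auto presburger+
  have nT: "5*k+1 \<notin> T" "5*k+4 \<notin> T" "5*k+5 \<notin> T" unfolding T_def by auto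
  have "(\<Prod>x\<in>insert (5*k+1) (insert (5*k+4) (insert (5*k+5) T)). 1 - XX^x)
      = (1 - XX^(5*k+1)) * ((1 - XX^(5*k+4)) * ((1 - XX^(5*k+5)) * (\<Prod>x\<in>T. 1 - XX^x)))"
    using fT nT by simp
  also have "(\<Prod>x\<in>T. 1 - XX^x) = AA k" using Suc unfolding T_def .
  also have "(1 - XX^(5*k+1)) * ((1 - XX^(5*k+4)) * ((1 - XX^(5*k+5)) * AA k)) = AA (Suc k)"
  proof -
    have "(XX ^ 5) ^ Suc k = XX^(5*k+5)" by (simp add: power_add mult.commute flip: power_mult)
    then show ?thesis unfolding AA_def EE_Suc TT_def by (simp add: mult_ac)
  qed
  finally show ?case unfolding eq .
qed

lemma neg1_par: "even (a + b) \<Longrightarrow> (-1::real) ^ a = (-1) ^ b"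
  by (cases "even a") auto

lemma P7_nat: "P7 m = int (5 * tri m + m)"
proof -
  have "int m * (5 * int m - 3) = 2 * int (5 * tri m + m)" using tri_int[of m] by (simp add: algebra_simps)
  then show ?thesis unfolding P7_def by simp
qed

lemma Q7_nat: "Q7 m = int (5 * tri m + 4 * m)"
proof -
  have "int m * (5 * int m + 3) = 2 * int (5 * tri m + 4 * m)" using tri_int[of m] by (simp add: algebra_simps)
  then show ?thesis unfolding Q7_def by simp
qed

lemma main_sum:
  fixes N nn :: nat
  assumes nn: "N < nn"
  defines "G \<equiv> (\<lambda>e::nat. real_of_int (part (int N - int e)))"
  shows "(\<Sum>j\<le>2*nn. (-1) ^ (j + nn) * G (ee nn j)) =
    G 0 + (\<Sum>k<nn. (-1) ^ Suc k * (real_of_int (part (int N - P7 (Suc k))) + real_of_int (part (int N - Q7 (Suc k)))))"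
proof -
  define f where "f j = (-1::real) ^ (j + nn) * G (ee nn j)" for j
  have "(\<Sum>j\<le>2*nn. f j) = (\<Sum>j<nn + Suc nn. f j)"
    by (simp add: lessThan_Suc_atMost[symmetric] mult_2)
  also have "\<dots> = (\<Sum>j<nn. f j) + (\<Sum>i<Suc nn. f (nn + i))" by (rule sum_split)
  also have "(\<Sum>i<Suc nn. f (nn + i)) = f nn + (\<Sum>k<nn. f (nn + Suc k))"
    by (subst sum.lessThan_Suc_shift) simp
  also have "(\<Sum>j<nn. f j) = (\<Sum>k<nn. f (nn - Suc k))"
    by (rule sum.nat_diff_reindex[symmetric])
  also have "(\<Sum>k<nn. f (nn - Suc k)) = (\<Sum>k<nn. (-1) ^ Suc k * real_of_int (part (int N - P7 (Suc k))))"
  proof (rule sum.cong)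
    fix k assume k: "k \<in> {..<nn}"
    have "ee nn (nn - Suc k) = 5 * tri (Suc k) + Suc k" using k by (simp add: ee_def)
    moreover have "(-1::real) ^ (nn - Suc k + nn) = (-1) ^ Suc k"
      by (rule neg1_par) (use k in auto)
    ultimately show "f (nn - Suc k) = (-1) ^ Suc k * real_of_int (part (int N - P7 (Suc k)))"
      unfolding f_def G_def P7_nat by simp
  qed simp
  also have "(\<Sum>k<nn. f (nn + Suc k)) = (\<Sum>k<nn. (-1) ^ Suc k * real_of_int (part (int N - Q7 (Suc k))))"
  proof (rule sum.cong)
    fix k assume k: "k \<in> {..<nn}"
    have "ee nn (nn + Suc k) = 5 * tri (Suc k) + 4 * Suc k" by (simp add: ee_def)
    moreover have "(-1::real) ^ (nn + Suc k + nn) = (-1) ^ Suc k"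
      by (rule neg1_par) auto
    ultimately show "f (nn + Suc k) = (-1) ^ Suc k * real_of_int (part (int N - Q7 (Suc k)))"
      unfolding f_def G_def Q7_nat by simp
  qed simp
  also have "f nn = G 0" unfolding f_def by (simp add: ee_def)
  finally show ?thesis unfolding f_def by (simp add: sum.distrib algebra_simps sum_subtractf sum_negf)
qed

theorem theorem2p2:
  fixes n :: int
  assumes "n \<ge> 0"
  shows "real_of_int (p25_35 n) = real_of_int (part n) +
    (\<Sum>k. (-1) ^ (Suc k) * real_of_int (part (n - P7 (Suc k)) + part (n - Q7 (Suc k))))"
proof -
  obtain N where nN: "n = int N" using assms by (metis nonneg_eq_int)
  define nn where "nn = Suc N"
  define K where "K = 5 * nn"
  define S where "S = {m::nat. 0 < m \<and> m \<le> K}"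
  define S23 where "S23 = {m::nat. 0 < m \<and> (m mod 5 = 2 \<or> m mod 5 = 3) \<and> m \<le> K}"
  define G where "G = (\<lambda>e::nat. real_of_int (part (int N - int e)))"
  have NK: "N \<le> K" unfolding K_def nn_def by simp
  have fS: "finite S" unfolding S_def by (rule finite_subset[of _ "{..K}"]) auto
  have sub: "S23 \<subseteq> S" unfolding S_def S23_def by auto
  have fS23: "finite S23" using fS sub by (rule finite_subset[rotated])
  have diff: "S - S23 = {m. 0<m \<and> m \<le> 5*nn \<and> \<not>(m mod 5 = 2 \<or> m mod 5 = 3)}"
    unfolding S_def S23_def K_def by auto
  have partS: "real_of_int (part (int i)) = real (cnt S i)" if "i \<le> K" for i
  proof -
    have "partitions_with (\<lambda>_. True) i = msets {m. 0 < m \<and> True \<and> m \<le> K} i"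
      using that by (rule partitions_with_msets)
    then show ?thesis unfolding part_def cnt_def S_def by simp
  qed
  have p23: "real_of_int (p25_35 n) = real (cnt S23 N)"
  proof -
    have "partitions_with (\<lambda>m. m mod 5 = 2 \<or> m mod 5 = 3) N = msets S23 N"
      unfolding S23_def using NK by (rule partitions_with_msets)
    then show ?thesis unfolding p25_35_def cnt_def nN by simp
  qed
  have prodS: "(\<Prod>x\<in>S. 1 - XX^x) = AA nn * (\<Prod>x\<in>S23. 1 - XX^x)"
    using prod.subset_diff[OF sub fS, of "\<lambda>x. 1 - XX^x"] diff Sp_prod by simp
  have h1: "FS S23 * (\<Prod>x\<in>S23. 1 - XX^x) = 1" using fS23 by (rule FS_prod) (simp add: S23_def)
  have h2: "FS S * (\<Prod>x\<in>S. 1 - XX^x) = 1" using fS by (rule FS_prod) (simp add: S_def)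
  have FSeq: "FS S23 = FS S * AA nn"
  proof -
    have "FS S23 = FS S23 * (FS S * (\<Prod>x\<in>S. 1 - XX^x))" using h2 by simp
    also have "\<dots> = (FS S * AA nn) * (FS S23 * (\<Prod>x\<in>S23. 1 - XX^x))" unfolding prodS by (simp add: mult_ac)
    finally show ?thesis using h1 by simp
  qed
  have "real_of_int (p25_35 n) = FS S23 $ N" unfolding p23 FS_def by simp
  also have "\<dots> = (\<Sum>i=0..N. FS S $ i * AA nn $ (N - i))" unfolding FSeq fps_mult_nth ..
  also have "\<dots> = (\<Sum>i=0..N. real_of_int (part (int i)) * (\<Sum>j\<le>2*nn. (-1) ^ (j + nn) * (if N - i = ee nn j then 1 else 0)))"
  proof (rule sum.cong)
    fix i assume i: "i \<in> {0..N}"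
    have "AA nn $ (N - i) = (\<Sum>j\<le>2*nn. (-1) ^ (j + nn) * (if N - i = ee nn j then 1 else 0))"
      by (rule AA_nth[of nn N]) (auto simp: nn_def)
    moreover have "FS S $ i = real_of_int (part (int i))" using partS[of i] i NK by (simp add: FS_def)
    ultimately show "FS S $ i * AA nn $ (N - i) = real_of_int (part (int i)) * (\<Sum>j\<le>2*nn. (-1) ^ (j + nn) * (if N - i = ee nn j then 1 else 0))"
      by simp
  qed simp
  also have "\<dots> = (\<Sum>j\<le>2*nn. (-1) ^ (j + nn) * (\<Sum>i=0..N. real_of_int (part (int i)) * (if N - i = ee nn j then 1 else 0)))"
    by (simp add: sum_distrib_left sum_distrib_right sum.swap[of _ "{0..N}"] mult_ac)
  also have "\<dots> = (\<Sum>j\<le>2*nn. (-1) ^ (j + nn) * G (ee nn j))"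
  proof (rule sum.cong)
    fix j assume "j \<in> {..2*nn}"
    define e where "e = ee nn j"
    have "(\<Sum>i=0..N. real_of_int (part (int i)) * (if N - i = e then 1 else 0)) = G e"
    proof (cases "e \<le> N")
      case True
      have "(\<Sum>i=0..N. real_of_int (part (int i)) * (if N - i = e then 1 else 0))
          = (\<Sum>i=0..N. if i = N - e then real_of_int (part (int i)) else 0)"
        by (rule sum.cong) (use True in auto)
      also have "\<dots> = real_of_int (part (int (N - e)))" by simp
      finally show ?thesis unfolding G_def using True by (simp add: of_nat_diff)
    next
      case False
      have "(\<Sum>i=0..N. real_of_int (part (int i)) * (if N - i = e then 1 else 0)) = 0"
        by (rule sum.neutral) (use False in auto)
      moreover have "G e = 0" unfolding G_def part_def using False by simp
      ultimately show ?thesis by simp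
    qed
    then show "(-1) ^ (j + nn) * (\<Sum>i=0..N. real_of_int (part (int i)) * (if N - i = ee nn j then 1 else 0))
      = (-1) ^ (j + nn) * G (ee nn j)" unfolding e_def by simp
  qed simp
  also have "\<dots> = G 0 + (\<Sum>k<nn. (-1) ^ Suc k * (real_of_int (part (int N - P7 (Suc k))) + real_of_int (part (int N - Q7 (Suc k)))))"
    unfolding G_def by (rule main_sum) (simp add: nn_def)
  also have "(\<Sum>k<nn. (-1) ^ Suc k * (real_of_int (part (int N - P7 (Suc k))) + real_of_int (part (int N - Q7 (Suc k)))))
      = (\<Sum>k. (-1) ^ (Suc k) * real_of_int (part (n - P7 (Suc k)) + part (n - Q7 (Suc k))))"
  proof -
    have "(\<Sum>k. (-1) ^ (Suc k) * real_of_int (part (n - P7 (Suc k)) + part (n - Q7 (Suc k))))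
       = (\<Sum>k<nn. (-1) ^ (Suc k) * real_of_int (part (n - P7 (Suc k)) + part (n - Q7 (Suc k))))"
    proof (rule suminf_finite)
      fix k assume "k \<notin> {..<nn}"
      then have k: "N < Suc k" unfolding nn_def by simp
      have "int N < P7 (Suc k)" using k unfolding P7_nat by simp
      moreover have "int N < Q7 (Suc k)" using k unfolding Q7_nat by simp
      ultimately show "(-1) ^ (Suc k) * real_of_int (part (n - P7 (Suc k)) + part (n - Q7 (Suc k))) = 0"
        unfolding nN part_def by simp
    qed simp
    then show ?thesis unfolding nN by simp
  qed
  finally show ?thesis unfolding G_def nN by simp
qed

end
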